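(* Let $0<a<b<1$ and $\varrho\ge0$ a function on $[a,b]$ with $\varrho/\zeta$ non-decreasing and bounded. Let $(u,\lambda)$, $u\in C^{0,1}([a,b])$, solve $u'+(\frac1x+\widetilde\varrho)u+\lambda\zeta=0$ a.e. on $(a,b)$ with $u(a)=1$, $u(b)=-1$, and assume $u>-1$ on $[a,b)$. Set $v:=-u$. Then (i) $\mu_u(t)\le\mu_v(t)$ for every $t\in(0,1)$; (ii) if $\varrho\not\equiv0$ on $[a,b)$, then $\mu_u(t)<\mu_v(t)$ for every $t\in(0,1)$.
   Context: $\zeta(t)=\frac2{1-t^2}$, $\widetilde\varrho(t)=t\zeta(t)+\varrho(t)$. $\mu$ is the measure $dx/x$ on $(0,\infty)$, and for a function $u$ on $[a,b]$, $\mu_u(t):=\mu(\{x\in[a,b]:u(x)>t\})$ for $t>0$. *)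

theory Defs
  imports "HOL-Analysis.Analysis"
begin

definition zeta :: "real \<Rightarrow> real" where
  "zeta t = 2 / (1 - t\<^sup>2)"

definition rho_tilde :: "(real \<Rightarrow> real) \<Rightarrow> real \<Rightarrow> real" where
  "rho_tilde \<rho> t = t * zeta t + \<rho> t"

text \<open>The measure dx/x on (0,infinity), realised as a measure on the reals
  with density 1/x on (0,infinity) and 0 elsewhere.\<close>
definition mu :: "real measure" where
  "mu = density lborel (\<lambda>x. ennreal (indicator {0<..} x / x))"

definition mu_dist :: "(real \<Rightarrow> real) \<Rightarrow> real \<Rightarrow> real \<Rightarrow> real \<Rightarrow> ennreal" where
  "mu_dist u a b t = emeasure mu {x \<in> {a..b}. u x > t}"

end

theory Submission
  imports Defs
begin

definition plip :: "real set \<Rightarrow> (real \<Rightarrow> real) \<Rightarrow> real \<Rightarrow> bool" where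
  "plip S f x \<longleftrightarrow> (\<exists>B d. d > 0 \<and> (\<forall>y\<in>S. \<bar>y - x\<bar> < d \<longrightarrow> \<bar>f y - f x\<bar> \<le> B * \<bar>y - x\<bar>))"

lemma plip_cont:
  assumes "plip S f x" shows "continuous (at x within S) f"
proof -
  obtain B d where d: "d > 0" and h: "\<And>y. y\<in>S \<Longrightarrow> \<bar>y - x\<bar> < d \<Longrightarrow> \<bar>f y - f x\<bar> \<le> B * \<bar>y - x\<bar>"
    using assms unfolding plip_def by blast
  have B: "\<bar>f y - f x\<bar> \<le> \<bar>B\<bar> * \<bar>y - x\<bar>" if "y\<in>S" "\<bar>y - x\<bar> < d" for y
  proof -
    have "B * \<bar>y - x\<bar> \<le> \<bar>B\<bar> * \<bar>y - x\<bar>" by (simp add: mult_right_mono)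
    thus ?thesis using h[OF that] by linarith
  qed
  show ?thesis
    unfolding continuous_within_eps_delta
  proof (intro allI impI)
    fix e :: real assume e: "e > 0"
    show "\<exists>d'>0. \<forall>y\<in>S. dist y x < d' \<longrightarrow> dist (f y) (f x) < e"
    proof (intro exI[of _ "min d (e / (\<bar>B\<bar> + 1))"] conjI ballI impI)
      show "0 < min d (e / (\<bar>B\<bar> + 1))" using d e by simp
      fix y assume y: "y \<in> S" "dist y x < min d (e / (\<bar>B\<bar> + 1))"
      hence "\<bar>y - x\<bar> < d" "\<bar>y - x\<bar> < e / (\<bar>B\<bar> + 1)" by (auto simp: dist_real_def)
      hence "\<bar>f y - f x\<bar> \<le> \<bar>B\<bar> * \<bar>y - x\<bar>" using B y by blast
      also have "\<dots> \<le> (\<bar>B\<bar> + 1) * \<bar>y - x\<bar>" by (simp add: mult_right_mono)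
      also have "\<dots> < e" using \<open>\<bar>y - x\<bar> < e / (\<bar>B\<bar> + 1)\<close>
        by (simp add: pos_less_divide_eq mult.commute)
      finally show "dist (f y) (f x) < e" by (simp add: dist_real_def)
    qed
  qed
qed

lemma mono_ae:
  fixes f :: "real \<Rightarrow> real"
  assumes pq: "p \<le> q" and pl: "\<forall>x\<in>{p..q}. plip {p..q} f x"
    and ae: "AE x in lborel. x \<in> {p<..<q} \<longrightarrow> (\<exists>d\<ge>0. (f has_real_derivative d) (at x))"
  shows "f p \<le> f q"
proof (rule ccontr)
  assume "\<not> f p \<le> f q"
  hence fpq: "f q < f p" by simp
  hence pq': "p < q" using pq by (cases "p = q") auto
  define e where "e = (f p - f q) / (2 * (q - p))"
  have e: "e > 0" using fpq pq' by (simp add: e_def)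
  define g where "g x = f x + e * (x - p)" for x
  have "e * (q - p) = (f p - f q) / 2" using pq' by (simp add: e_def field_simps)
  hence gq: "g q < g p" using fpq by (simp add: g_def)
  obtain N where N: "{x \<in> space lborel. \<not> (x \<in> {p<..<q} \<longrightarrow> (\<exists>d\<ge>0. (f has_real_derivative d) (at x)))} \<subseteq> N"
    "emeasure lborel N = 0" "N \<in> sets lborel"
    using AE_E[OF ae] by blast
  define N' where "N' = N \<inter> {p..q}"
  have negN': "negligible N'"
  proof -
    have "N \<in> null_sets lborel" using N(2,3) by (simp add: null_sets_def)
    hence "N \<in> null_sets lebesgue" by (simp add: null_sets_completionI)
    hence "negligible N" by (simp add: negligible_iff_null_sets)
    thus ?thesis unfolding N'_def by (rule negligible_subset) auto
  qed
  have plg: "plip {p..q} g x" if xin: "x \<in> {p..q}" for x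
  proof -
    obtain B d where d: "d > 0" and h: "\<And>y. y\<in>{p..q} \<Longrightarrow> \<bar>y - x\<bar> < d \<Longrightarrow> \<bar>f y - f x\<bar> \<le> B * \<bar>y - x\<bar>"
      using bspec[OF pl xin] unfolding plip_def by blast
    show ?thesis unfolding plip_def
    proof (rule exI[of _ "B + e"], rule exI[of _ d], intro conjI ballI impI)
      show "d > 0" by fact
      fix y assume y: "y \<in> {p..q}" "\<bar>y - x\<bar> < d"
      have "g y - g x = (f y - f x) + e * (y - x)" by (simp add: g_def right_diff_distrib)
      hence "\<bar>g y - g x\<bar> \<le> \<bar>f y - f x\<bar> + \<bar>e * (y - x)\<bar>" by (simp only: abs_triangle_ineq)
      moreover have "\<bar>e * (y - x)\<bar> = e * \<bar>y - x\<bar>" using e by (simp add: abs_mult)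
      moreover have "\<bar>f y - f x\<bar> \<le> B * \<bar>y - x\<bar>" using h[OF y] .
      ultimately have "\<bar>g y - g x\<bar> \<le> B * \<bar>y - x\<bar> + e * \<bar>y - x\<bar>" by linarith
      thus "\<bar>g y - g x\<bar> \<le> (B + e) * \<bar>y - x\<bar>" by (simp add: distrib_right)
    qed
  qed
  have gcont: "continuous_on {p..q} g"
    unfolding continuous_on_eq_continuous_within using plg plip_cont by blast
  have neg: "negligible (g ` N')"
  proof (rule negligible_locally_Lipschitz_image)
    show "DIM(real) \<le> DIM(real)" by simp
    show "negligible N'" by fact
    fix x assume x: "x \<in> N'"
    then obtain B d where d: "d > 0" and h: "\<And>y. y\<in>{p..q} \<Longrightarrow> \<bar>y - x\<bar> < d \<Longrightarrow> \<bar>g y - g x\<bar> \<le> B * \<bar>y - x\<bar>"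
      using plg[of x] x unfolding plip_def N'_def by blast
    show "\<exists>T B. open T \<and> x \<in> T \<and> (\<forall>y\<in>N' \<inter> T. norm (g y - g x) \<le> B * norm (y - x))"
    proof (rule exI[of _ "ball x d"], rule exI[of _ B], intro conjI ballI)
      show "open (ball x d)" by simp
      show "x \<in> ball x d" using d by simp
      fix y assume "y \<in> N' \<inter> ball x d"
      hence "y \<in> {p..q}" "\<bar>y - x\<bar> < d" by (auto simp: N'_def dist_real_def abs_minus_commute)
      thus "norm (g y - g x) \<le> B * norm (y - x)" using h by simp
    qed
  qed
  have "\<not> {g q<..<g p} \<subseteq> g ` N'"
  proof
    assume "{g q<..<g p} \<subseteq> g ` N'"
    hence "negligible {g q<..<g p}" using neg negligible_subset by blast
    thus False using gq negligible_interval(2)[of "g q" "g p"] by (simp add: box_real)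
  qed
  then obtain y where y0: "y \<in> {g q<..<g p}" "y \<notin> g ` N'" by blast
  hence y: "g q < y" "y < g p" "y \<notin> g ` N'" by auto
  define S where "S = {p..q} \<inter> g -` {y..}"
  have Sc: "closed S" unfolding S_def by (rule continuous_closed_preimage[OF gcont]) auto
  have pS: "p \<in> S" using y pq by (simp add: S_def)
  have Sb: "bdd_above S" unfolding S_def by (rule bdd_aboveI[of _ q]) auto
  define s where "s = Sup S"
  have sS: "s \<in> S" unfolding s_def using closed_contains_Sup[OF _ Sb Sc] pS by blast
  have sup: "\<And>x. x \<in> S \<Longrightarrow> x \<le> s" unfolding s_def using Sb by (simp add: cSup_upper)
  have s1: "p \<le> s" "s \<le> q" "y \<le> g s" using sS by (auto simp: S_def)
  have sq: "s \<noteq> q" using s1 y by auto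
  have after: "g x < y" if "x \<in> {s<..q}" for x
  proof (rule ccontr)
    assume "\<not> g x < y"
    hence "x \<in> S" using that s1 by (auto simp: S_def)
    from sup[OF this] that show False by simp
  qed
  have gs: "g s = y"
  proof (rule ccontr)
    assume "g s \<noteq> y"
    hence gt: "g s > y" using s1 by simp
    have "continuous (at s within {p..q}) g" using plg plip_cont s1 by auto
    hence "\<exists>d>0. \<forall>x\<in>{p..q}. dist x s < d \<longrightarrow> dist (g x) (g s) < g s - y"
      unfolding continuous_within_eps_delta using gt by simp
    then obtain d where d: "d > 0" "\<And>x. x \<in> {p..q} \<Longrightarrow> dist x s < d \<Longrightarrow> dist (g x) (g s) < g s - y"
      by blast
    have "\<exists>\<delta>. 0 < \<delta> \<and> \<delta> < d \<and> \<delta> \<le> q - s"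
      using d sq s1 by (intro exI[of _ "min (d/2) ((q - s)/2)"]) (auto simp: min_def)
    then obtain \<delta> where \<delta>: "0 < \<delta>" "\<delta> < d" "\<delta> \<le> q - s" by blast
    define x where "x = s + \<delta>"
    have x: "x \<in> {s<..q}" "x \<in> {p..q}" "dist x s < d" using \<delta> s1 unfolding x_def dist_real_def by auto
    have "g x > y" using d(2)[OF x(2,3)] by (auto simp: dist_real_def)
    thus False using after[OF x(1)] by simp
  qed
  have sp: "s \<noteq> p" using gs y by auto
  have sN: "s \<notin> N"
  proof
    assume "s \<in> N"
    hence "s \<in> N'" using s1 by (simp add: N'_def)
    hence "g s \<in> g ` N'" by (rule imageI)
    thus False using y(3) gs by simp
  qed
  have "s \<notin> {x \<in> space lborel. \<not> (x \<in> {p<..<q} \<longrightarrow> (\<exists>d\<ge>0. (f has_real_derivative d) (at x)))}"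
    using N(1) sN by blast
  moreover have "s \<in> {p<..<q}" using s1 sp sq by simp
  ultimately have "\<exists>d\<ge>0. (f has_real_derivative d) (at s)" by simp
  then obtain d where d: "d \<ge> 0" "(f has_real_derivative d) (at s)" by blast
  have "(g has_real_derivative d + e) (at s)"
    unfolding g_def by (auto intro!: derivative_eq_intros d(2))
  moreover have "d + e > 0" using d e by simp
  ultimately obtain dd where dd: "dd > 0" "\<And>h. h > 0 \<Longrightarrow> h < dd \<Longrightarrow> g s < g (s + h)"
    using DERIV_pos_inc_right by blast
  have "\<exists>\<delta>. 0 < \<delta> \<and> \<delta> < dd \<and> \<delta> \<le> q - s"
    using dd sq s1 by (intro exI[of _ "min (dd/2) ((q - s)/2)"]) (auto simp: min_def)
  then obtain h where h0: "0 < h" "h < dd" "h \<le> q - s" by blast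
  have h: "h > 0" "h < dd" "s + h \<in> {s<..q}" using h0 by auto
  show False using dd(2)[OF h(1,2)] after[OF h(3)] gs by simp
qed

lemma plip_subset: "plip T f x \<Longrightarrow> S \<subseteq> T \<Longrightarrow> plip S f x"
  unfolding plip_def by blast

lemma plip_const: "plip S (\<lambda>y. c) x"
  unfolding plip_def by (rule exI[of _ 0], rule exI[of _ 1]) auto

lemma plip_add:
  assumes "plip S f x" "plip S g x" shows "plip S (\<lambda>y. f y + g y) x"
proof -
  obtain B1 d1 where d1: "d1 > 0" "\<And>y. y\<in>S \<Longrightarrow> \<bar>y - x\<bar> < d1 \<Longrightarrow> \<bar>f y - f x\<bar> \<le> B1 * \<bar>y - x\<bar>"
    using assms(1) unfolding plip_def by blast
  obtain B2 d2 where d2: "d2 > 0" "\<And>y. y\<in>S \<Longrightarrow> \<bar>y - x\<bar> < d2 \<Longrightarrow> \<bar>g y - g x\<bar> \<le> B2 * \<bar>y - x\<bar>"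
    using assms(2) unfolding plip_def by blast
  show ?thesis unfolding plip_def
  proof (rule exI[of _ "B1 + B2"], rule exI[of _ "min d1 d2"], intro conjI ballI impI)
    show "min d1 d2 > 0" using d1 d2 by simp
    fix y assume y: "y \<in> S" "\<bar>y - x\<bar> < min d1 d2"
    have "\<bar>f y + g y - (f x + g x)\<bar> \<le> \<bar>f y - f x\<bar> + \<bar>g y - g x\<bar>" by linarith
    also have "\<dots> \<le> B1 * \<bar>y - x\<bar> + B2 * \<bar>y - x\<bar>" using d1(2)[of y] d2(2)[of y] y by simp
    finally show "\<bar>f y + g y - (f x + g x)\<bar> \<le> (B1 + B2) * \<bar>y - x\<bar>" by (simp add: algebra_simps)
  qed
qed

lemma plip_cmult:
  assumes "plip S f x" shows "plip S (\<lambda>y. c * f y) x"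
proof -
  obtain B1 d1 where d1: "d1 > 0" "\<And>y. y\<in>S \<Longrightarrow> \<bar>y - x\<bar> < d1 \<Longrightarrow> \<bar>f y - f x\<bar> \<le> B1 * \<bar>y - x\<bar>"
    using assms(1) unfolding plip_def by blast
  show ?thesis unfolding plip_def
  proof (rule exI[of _ "\<bar>c\<bar> * B1"], rule exI[of _ "d1"], intro conjI ballI impI)
    show "d1 > 0" using d1 by simp
    fix y assume y: "y \<in> S" "\<bar>y - x\<bar> < d1"
    have "\<bar>c * f y - c * f x\<bar> = \<bar>c\<bar> * \<bar>f y - f x\<bar>" by (metis abs_mult right_diff_distrib)
    also have "\<dots> \<le> \<bar>c\<bar> * (B1 * \<bar>y - x\<bar>)" using d1(2)[OF y] by (simp add: mult_left_mono)
    finally show "\<bar>c * f y - c * f x\<bar> \<le> \<bar>c\<bar> * B1 * \<bar>y - x\<bar>" by simp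
  qed
qed

lemma plip_uminus: "plip S f x \<Longrightarrow> plip S (\<lambda>y. - f y) x"
  using plip_cmult[of S f x "-1"] by simp

lemma plip_diff: "plip S f x \<Longrightarrow> plip S g x \<Longrightarrow> plip S (\<lambda>y. f y - g y) x"
  using plip_add[of S f x "\<lambda>y. - g y"] plip_uminus[of S g x] by simp

lemma plip_mult:
  assumes "plip S f x" "plip S g x" shows "plip S (\<lambda>y. f y * g y) x"
proof -
  obtain B1 d1 where d1: "d1 > 0" "\<And>y. y\<in>S \<Longrightarrow> \<bar>y - x\<bar> < d1 \<Longrightarrow> \<bar>f y - f x\<bar> \<le> B1 * \<bar>y - x\<bar>"
    using assms(1) unfolding plip_def by blast
  obtain B2 d2 where d2: "d2 > 0" "\<And>y. y\<in>S \<Longrightarrow> \<bar>y - x\<bar> < d2 \<Longrightarrow> \<bar>g y - g x\<bar> \<le> B2 * \<bar>y - x\<bar>"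
    using assms(2) unfolding plip_def by blast
  define C where "C = \<bar>f x\<bar> + \<bar>B1\<bar>"
  show ?thesis unfolding plip_def
  proof (rule exI[of _ "C * \<bar>B2\<bar> + \<bar>g x\<bar> * \<bar>B1\<bar>"], rule exI[of _ "min 1 (min d1 d2)"], intro conjI ballI impI)
    show "min 1 (min d1 d2) > 0" using d1 d2 by simp
    fix y assume y: "y \<in> S" "\<bar>y - x\<bar> < min 1 (min d1 d2)"
    have yd: "\<bar>y - x\<bar> < d1" "\<bar>y - x\<bar> < d2" "\<bar>y - x\<bar> < 1" using y by auto
    have "B1 * \<bar>y - x\<bar> \<le> \<bar>B1\<bar> * \<bar>y - x\<bar>" "B2 * \<bar>y - x\<bar> \<le> \<bar>B2\<bar> * \<bar>y - x\<bar>"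
      by (simp_all add: mult_right_mono)
    hence f1: "\<bar>f y - f x\<bar> \<le> \<bar>B1\<bar> * \<bar>y - x\<bar>" and g1: "\<bar>g y - g x\<bar> \<le> \<bar>B2\<bar> * \<bar>y - x\<bar>"
      using d1(2)[OF y(1) yd(1)] d2(2)[OF y(1) yd(2)] by linarith+
    have "\<bar>B1\<bar> * \<bar>y - x\<bar> \<le> \<bar>B1\<bar>" using yd(3) by (simp add: mult_left_le)
    hence fy: "\<bar>f y\<bar> \<le> C" using f1 unfolding C_def by linarith
    have "f y * g y - f x * g x = f y * (g y - g x) + g x * (f y - f x)" by (simp add: algebra_simps)
    hence "\<bar>f y * g y - f x * g x\<bar> \<le> \<bar>f y\<bar> * \<bar>g y - g x\<bar> + \<bar>g x\<bar> * \<bar>f y - f x\<bar>"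
      by (simp add: abs_mult[symmetric] abs_triangle_ineq)
    also have "\<dots> \<le> C * (\<bar>B2\<bar> * \<bar>y - x\<bar>) + \<bar>g x\<bar> * (\<bar>B1\<bar> * \<bar>y - x\<bar>)"
      by (intro add_mono mult_mono f1 g1 fy) (auto simp: C_def)
    finally show "\<bar>f y * g y - f x * g x\<bar> \<le> (C * \<bar>B2\<bar> + \<bar>g x\<bar> * \<bar>B1\<bar>) * \<bar>y - x\<bar>"
      by (simp add: algebra_simps)
  qed
qed

lemma plip_deriv:
  assumes "(f has_real_derivative d) (at x within S)" shows "plip S f x"
proof -
  have "((\<lambda>y. (f y - f x) / (y - x)) \<longlongrightarrow> d) (at x within S)"
    using assms by (simp add: has_field_derivative_iff)
  hence "\<forall>\<^sub>F y in at x within S. dist ((f y - f x) / (y - x)) d < 1"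
    by (rule tendstoD) simp
  then obtain e where e: "e > 0" "\<And>y. y \<in> S \<Longrightarrow> y \<noteq> x \<Longrightarrow> dist y x < e \<Longrightarrow> dist ((f y - f x) / (y - x)) d < 1"
    unfolding eventually_at by blast
  show ?thesis unfolding plip_def
  proof (rule exI[of _ "\<bar>d\<bar> + 1"], rule exI[of _ e], intro conjI ballI impI)
    show "e > 0" by fact
    fix y assume y: "y \<in> S" "\<bar>y - x\<bar> < e"
    show "\<bar>f y - f x\<bar> \<le> (\<bar>d\<bar> + 1) * \<bar>y - x\<bar>"
    proof (cases "y = x")
      case False
      hence "\<bar>(f y - f x) / (y - x) - d\<bar> < 1" using e(2)[of y] y by (simp add: dist_real_def)
      hence "\<bar>(f y - f x) / (y - x)\<bar> \<le> \<bar>d\<bar> + 1" by linarith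
      hence "\<bar>f y - f x\<bar> / \<bar>y - x\<bar> \<le> \<bar>d\<bar> + 1" by (simp add: abs_divide)
      thus ?thesis using False by (simp add: divide_le_eq)
    qed simp
  qed
qed

lemma plip_compose:
  assumes g: "plip S g x" and h: "\<And>s t. s \<in> g ` S \<Longrightarrow> t \<in> g ` S \<Longrightarrow> \<bar>h s - h t\<bar> \<le> C * \<bar>s - t\<bar>"
    and x: "x \<in> S"
  shows "plip S (\<lambda>y. h (g y)) x"
proof -
  obtain B1 d1 where d1: "d1 > 0" "\<And>y. y\<in>S \<Longrightarrow> \<bar>y - x\<bar> < d1 \<Longrightarrow> \<bar>g y - g x\<bar> \<le> B1 * \<bar>y - x\<bar>"
    using g unfolding plip_def by blast
  show ?thesis unfolding plip_def
  proof (rule exI[of _ "\<bar>C\<bar> * \<bar>B1\<bar>"], rule exI[of _ d1], intro conjI ballI impI)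
    show "d1 > 0" by fact
    fix y assume y: "y \<in> S" "\<bar>y - x\<bar> < d1"
    have "\<bar>h (g y) - h (g x)\<bar> \<le> C * \<bar>g y - g x\<bar>" using h y x by blast
    also have "\<dots> \<le> \<bar>C\<bar> * \<bar>g y - g x\<bar>" by (simp add: mult_right_mono)
    also have "\<dots> \<le> \<bar>C\<bar> * (\<bar>B1\<bar> * \<bar>y - x\<bar>)"
    proof -
      have "B1 * \<bar>y - x\<bar> \<le> \<bar>B1\<bar> * \<bar>y - x\<bar>" by (simp add: mult_right_mono)
      hence "\<bar>g y - g x\<bar> \<le> \<bar>B1\<bar> * \<bar>y - x\<bar>" using d1(2)[OF y] by linarith
      thus ?thesis by (simp add: mult_left_mono)
    qed
    finally show "\<bar>h (g y) - h (g x)\<bar> \<le> \<bar>C\<bar> * \<bar>B1\<bar> * \<bar>y - x\<bar>" by simp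
  qed
qed

lemma exp_lip:
  fixes s t M :: real
  assumes "s \<le> M" "t \<le> M" shows "\<bar>exp s - exp t\<bar> \<le> exp M * \<bar>s - t\<bar>"
proof -
  have *: "exp t - exp s \<le> exp M * (t - s)" if "s \<le> t" "t \<le> M" for s t :: real
  proof -
    have "exp t - exp s = exp t * (1 - exp (s - t))" by (simp add: algebra_simps exp_diff)
    also have "1 - exp (s - t) \<le> t - s" using exp_ge_add_one_self[of "s - t"] by linarith
    hence "exp t * (1 - exp (s - t)) \<le> exp t * (t - s)" by (simp add: mult_left_mono)
    also have "\<dots> \<le> exp M * (t - s)" using that by (simp add: mult_right_mono)
    finally show ?thesis by simp
  qed
  show ?thesis
  proof (cases "s \<le> t")
    case True thus ?thesis using *[OF True assms(2)] by (simp add: abs_if)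
  next
    case False thus ?thesis using *[of t s] assms(1) by (simp add: abs_if)
  qed
qed

lemma mono_ae_le:
  fixes f g :: "real \<Rightarrow> real"
  assumes pq: "p \<le> q" and pf: "\<forall>x\<in>{p..q}. plip {p..q} f x" and pg: "\<forall>x\<in>{p..q}. plip {p..q} g x"
    and ae: "AE x in lborel. x \<in> {p<..<q} \<longrightarrow> (\<exists>df dg. (f has_real_derivative df) (at x) \<and> (g has_real_derivative dg) (at x) \<and> df \<le> dg)"
  shows "f q - f p \<le> g q - g p"
proof -
  have "(\<lambda>x. g x - f x) p \<le> (\<lambda>x. g x - f x) q"
  proof (rule mono_ae[OF pq])
    show "\<forall>x\<in>{p..q}. plip {p..q} (\<lambda>x. g x - f x) x" using pf pg plip_diff by blast
    show "AE x in lborel. x \<in> {p<..<q} \<longrightarrow> (\<exists>d\<ge>0. ((\<lambda>x. g x - f x) has_real_derivative d) (at x))"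
      using ae
    proof eventually_elim
      case (elim x)
      show ?case
      proof
        assume "x \<in> {p<..<q}"
        then obtain df dg where "(f has_real_derivative df) (at x)" "(g has_real_derivative dg) (at x)" "df \<le> dg"
          using elim by blast
        thus "\<exists>d\<ge>0. ((\<lambda>x. g x - f x) has_real_derivative d) (at x)"
          by (intro exI[of _ "dg - df"]) (auto intro: derivative_intros)
      qed
    qed
  qed
  thus ?thesis by simp
qed

lemma mono_ae_strict:
  fixes f :: "real \<Rightarrow> real"
  assumes prsq: "p \<le> r" "r < s" "s \<le> q" and pf: "\<forall>x\<in>{p..q}. plip {p..q} f x"
    and ae: "AE x in lborel. x \<in> {p<..<q} \<longrightarrow> (\<exists>d\<ge>0. (f has_real_derivative d) (at x))"
    and ae2: "AE x in lborel. x \<in> {r<..<s} \<longrightarrow> (\<exists>d\<ge>e. (f has_real_derivative d) (at x))"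
    and e: "e > 0"
  shows "f p < f q"
proof -
  have sub: "\<forall>x\<in>{p'..q'}. plip {p'..q'} f x" if "p \<le> p'" "q' \<le> q" for p' q'
  proof (intro ballI)
    fix x assume "x \<in> {p'..q'}"
    hence "x \<in> {p..q}" using that by auto
    hence "plip {p..q} f x" using pf by blast
    thus "plip {p'..q'} f x" by (rule plip_subset) (use that in auto)
  qed
  have "f p \<le> f r"
  proof (rule mono_ae[of p r f])
    show "p \<le> r" using prsq by simp
    show "\<forall>x\<in>{p..r}. plip {p..r} f x" using sub[of p r] prsq by simp
    show "AE x in lborel. x \<in> {p<..<r} \<longrightarrow> (\<exists>d\<ge>0. (f has_real_derivative d) (at x))"
      using ae by (rule eventually_mono) (use prsq in auto)
  qed
  moreover have "f s \<le> f q"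
  proof (rule mono_ae[of s q f])
    show "s \<le> q" using prsq by simp
    show "\<forall>x\<in>{s..q}. plip {s..q} f x" using sub[of s q] prsq by simp
    show "AE x in lborel. x \<in> {s<..<q} \<longrightarrow> (\<exists>d\<ge>0. (f has_real_derivative d) (at x))"
      using ae by (rule eventually_mono) (use prsq in auto)
  qed
  moreover have "(\<lambda>x. f x - e * x) r \<le> (\<lambda>x. f x - e * x) s"
  proof (rule mono_ae[of r s "\<lambda>x. f x - e * x"])
    show "r \<le> s" using prsq by simp
    show "\<forall>x\<in>{r..s}. plip {r..s} (\<lambda>x. f x - e * x) x"
    proof (intro ballI plip_diff)
      fix x assume x: "x \<in> {r..s}"
      show "plip {r..s} f x" using sub[of r s] prsq x by auto
      show "plip {r..s} (\<lambda>x. e * x) x" by (rule plip_deriv[of _ e]) (auto intro!: derivative_eq_intros)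
    qed
    show "AE x in lborel. x \<in> {r<..<s} \<longrightarrow> (\<exists>d\<ge>0. ((\<lambda>x. f x - e * x) has_real_derivative d) (at x))"
      using ae2
    proof eventually_elim
      case (elim x)
      show ?case
      proof
        assume "x \<in> {r<..<s}"
        then obtain d where "d \<ge> e" "(f has_real_derivative d) (at x)" using elim by blast
        thus "\<exists>d\<ge>0. ((\<lambda>x. f x - e * x) has_real_derivative d) (at x)"
          by (intro exI[of _ "d - e"]) (auto intro!: derivative_eq_intros)
      qed
    qed
  qed
  moreover have "e * r < e * s" using e prsq(2) by simp
  ultimately show ?thesis by simp
qed

lemma ln_has_integral:
  fixes p q :: real
  assumes "0 < p" "p \<le> q"
  shows "((\<lambda>x. 1 / x) has_integral (ln q - ln p)) {p..q}"
proof (rule fundamental_theorem_of_calculus[OF assms(2)])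
  fix x assume "x \<in> {p..q}"
  hence "x > 0" using assms by auto
  thus "(ln has_vector_derivative 1 / x) (at x within {p..q})"
    using DERIV_ln_divide[of x] by (simp add: has_real_derivative_iff_has_vector_derivative[symmetric] has_field_derivative_at_within)
qed

lemma mu_set:
  assumes "A \<in> sets borel" "A \<subseteq> {0<..}"
  shows "emeasure mu A = (\<integral>\<^sup>+x. ennreal (1 / x) * indicator A x \<partial>lborel)"
proof -
  have m: "(\<lambda>x::real. ennreal (indicator {0<..} x / x)) \<in> borel_measurable lborel" by measurable
  have "emeasure mu A = (\<integral>\<^sup>+x. ennreal (indicator {0<..} x / x) * indicator A x \<partial>lborel)"
    unfolding mu_def by (rule emeasure_density[OF m]) (use assms in simp)
  also have "\<dots> = (\<integral>\<^sup>+x. ennreal (1 / x) * indicator A x \<partial>lborel)"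
    by (rule nn_integral_cong) (use assms in \<open>auto simp: indicator_def\<close>)
  finally show ?thesis .
qed

lemma mu_Icc:
  fixes p q :: real
  assumes "0 < p" "p \<le> q"
  shows "emeasure mu {p..q} = ennreal (ln q - ln p)"
proof -
  have "emeasure mu {p..q} = (\<integral>\<^sup>+x. ennreal (1 / x) * indicator {p..q} x \<partial>lborel)"
    by (rule mu_set) (use assms in auto)
  also have "\<dots> = ennreal (ln q - ln p)"
    by (rule nn_integral_has_integral_lebesgue'[OF _ ln_has_integral[OF assms]]) (use assms in auto)
  finally show ?thesis .
qed

lemma mu_Ioo:
  fixes p q :: real
  assumes "0 < p" "p \<le> q"
  shows "emeasure mu {p<..<q} = ennreal (ln q - ln p)"
proof -
  have "emeasure mu {p<..<q} = (\<integral>\<^sup>+x. ennreal (1 / x) * indicator {p<..<q} x \<partial>lborel)"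
    by (rule mu_set) (use assms in auto)
  also have "\<dots> = ennreal (ln q - ln p)"
  proof (rule nn_integral_has_integral_lebesgue')
    show "((\<lambda>x. 1 / x) has_integral ln q - ln p) {p<..<q}"
      using ln_has_integral[OF assms] has_integral_open_interval[of "\<lambda>x. 1/x" "ln q - ln p" p q]
      by (simp add: box_real)
  qed (use assms in auto)
  finally show ?thesis .
qed

lemma sets_mu: "sets mu = sets borel"
  unfolding mu_def by simp

locale ST =
  fixes a b lam L :: real and \<rho> u :: "real \<Rightarrow> real"
  assumes ab: "0 < a" "a < b" "b < 1"
    and rho_nonneg: "\<forall>x\<in>{a..b}. \<rho> x \<ge> 0"
    and rho_mono: "mono_on {a..b} (\<lambda>x. \<rho> x / zeta x)"
    and u_lip: "L-lipschitz_on {a..b} u"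
    and ode: "AE x in lborel. x \<in> {a<..<b} \<longrightarrow>
       (u has_real_derivative (- ((1 / x + rho_tilde \<rho> x) * u x + lam * zeta x))) (at x)"
    and ua: "u a = 1" and ub: "u b = -1"
begin

definition "m x = \<rho> x / zeta x"
definition "I x = x / (1 - x\<^sup>2)"
definition "Iz x = 2 * x / (1 - x\<^sup>2)\<^sup>2"
definition "U0 x = (a * b / x - x) / (b - a)"
definition "l0 = (1 - a * b) / (b - a)"
definition "K x = 1 / (b - a) - l0 / (1 - x\<^sup>2)"
definition "Bf x = - (a * b / x + x) / (b - a)"
definition "Phi x = integral {a..x} \<rho>"
definition "E x = exp (Phi x)"
definition "J x = integral {a..x} (\<lambda>t. E t * Iz t)"
definition "du x = - ((1 / x + rho_tilde \<rho> x) * u x + lam * zeta x)"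
definition "w x = 2 * x\<^sup>2 / (1 - x\<^sup>2)\<^sup>2"
definition "C = {x \<in> {a..b}. \<not> continuous (at x within {a..b}) \<rho>}"

lemma inab: "x \<in> {a..b} \<Longrightarrow> 0 < x \<and> x < 1"
  using ab by auto

lemma sq_lt1: "x \<in> {a..b} \<Longrightarrow> x\<^sup>2 < 1"
proof -
  assume "x \<in> {a..b}"
  hence "0 < x" "x < 1" using inab by auto
  thus ?thesis by (simp add: power_less_one_iff abs_square_less_1)
qed

lemma zeta_pos: "x \<in> {a..b} \<Longrightarrow> zeta x > 0"
  using sq_lt1 by (simp add: zeta_def)

lemma zeta_mono: "x \<in> {a..b} \<Longrightarrow> y \<in> {a..b} \<Longrightarrow> x \<le> y \<Longrightarrow> zeta x \<le> zeta y"
proof -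
  assume xy: "x \<in> {a..b}" "y \<in> {a..b}" "x \<le> y"
  have "0 \<le> x" using inab[OF xy(1)] by simp
  hence "x\<^sup>2 \<le> y\<^sup>2" using power_mono[OF xy(3), of 2] by simp
  hence "1 - y\<^sup>2 \<le> 1 - x\<^sup>2" by simp
  moreover have "0 < 1 - y\<^sup>2" using sq_lt1 xy by simp
  ultimately show ?thesis unfolding zeta_def by (simp add: frac_le)
qed

lemma rho_eq: "x \<in> {a..b} \<Longrightarrow> \<rho> x = m x * zeta x"
  using zeta_pos[of x] by (simp add: m_def)

lemma m_nonneg: "x \<in> {a..b} \<Longrightarrow> m x \<ge> 0"
  using zeta_pos[of x] rho_nonneg by (simp add: m_def)

lemma m_mono: "x \<in> {a..b} \<Longrightarrow> y \<in> {a..b} \<Longrightarrow> x \<le> y \<Longrightarrow> m x \<le> m y"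
  using rho_mono unfolding m_def mono_on_def by blast

lemma rho_mono': "x \<in> {a..b} \<Longrightarrow> y \<in> {a..b} \<Longrightarrow> x \<le> y \<Longrightarrow> \<rho> x \<le> \<rho> y"
proof -
  assume xy: "x \<in> {a..b}" "y \<in> {a..b}" "x \<le> y"
  have "m x * zeta x \<le> m y * zeta y"
    using xy m_mono m_nonneg zeta_mono zeta_pos by (intro mult_mono) (auto intro: less_imp_le)
  thus ?thesis using rho_eq xy by simp
qed

lemma rho_mono_on: "mono_on {a..b} \<rho>"
  using rho_mono' unfolding mono_on_def by blast

lemma rho_int: "\<rho> integrable_on {a..b}"
  using integrable_on_mono_on[OF rho_mono_on] .

lemma rho_int_sub: "a \<le> x \<Longrightarrow> x \<le> y \<Longrightarrow> y \<le> b \<Longrightarrow> \<rho> integrable_on {x..y}"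
  by (rule integrable_subinterval_real[OF rho_int]) auto

lemma rho_le: "x \<in> {a..b} \<Longrightarrow> \<rho> x \<le> \<rho> b"
  using rho_mono'[of x b] ab by auto

lemma C_countable: "countable C"
  unfolding C_def by (rule mono_on_ctble_discont[OF rho_mono_on])

lemma Phi_deriv:
  assumes "x \<in> {a<..<b}" "x \<notin> C"
  shows "(Phi has_real_derivative \<rho> x) (at x)"
proof -
  have xin: "x \<in> {a..b}" using assms by auto
  have "continuous (at x within {a..b}) \<rho>" using assms xin by (simp add: C_def)
  hence "((\<lambda>u. integral {a..u} \<rho>) has_vector_derivative \<rho> x) (at x within {a..b} - {})"
    by (intro integral_has_vector_derivative_continuous_at[OF rho_int]) (use xin in auto)
  moreover have "Phi = (\<lambda>u. integral {a..u} \<rho>)" by (rule ext) (simp add: Phi_def)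
  ultimately have "(Phi has_real_derivative \<rho> x) (at x within {a..b})"
    by (simp add: has_real_derivative_iff_has_vector_derivative)
  thus ?thesis using at_within_Icc_at[of a x b] assms by simp
qed

lemma Phi_diff:
  assumes "a \<le> x" "x \<le> y" "y \<le> b"
  shows "Phi y - Phi x = integral {x..y} \<rho>"
proof -
  have "integral {a..x} \<rho> + integral {x..y} \<rho> = integral {a..y} \<rho>"
    using Henstock_Kurzweil_Integration.integral_combine[where f=\<rho> and a=a and c=x and b=y] assms rho_int_sub[of a y] by simp
  thus ?thesis by (simp add: Phi_def)
qed

lemma Phi_bounds:
  assumes "a \<le> x" "x \<le> y" "y \<le> b"
  shows "0 \<le> Phi y - Phi x" "Phi y - Phi x \<le> \<rho> b * (y - x)"
proof -
  have int: "\<rho> integrable_on {x..y}" using rho_int_sub assms by simp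
  show "0 \<le> Phi y - Phi x" unfolding Phi_diff[OF assms]
    by (rule integral_nonneg[OF int]) (use rho_nonneg assms in auto)
  have "integral {x..y} \<rho> \<le> integral {x..y} (\<lambda>t. \<rho> b)"
    by (rule integral_le[OF int]) (use rho_le assms in auto)
  thus "Phi y - Phi x \<le> \<rho> b * (y - x)" unfolding Phi_diff[OF assms] using assms by (simp add: mult.commute)
qed

lemma Phi_a: "Phi a = 0"
  by (simp add: Phi_def)

lemma Phi_range: "x \<in> {a..b} \<Longrightarrow> 0 \<le> Phi x \<and> Phi x \<le> \<rho> b * (b - a)"
proof -
  assume x: "x \<in> {a..b}"
  have "0 \<le> Phi x - Phi a" "Phi x - Phi a \<le> \<rho> b * (x - a)" using Phi_bounds[of a x] x by auto
  moreover have "\<rho> b * (x - a) \<le> \<rho> b * (b - a)" using x rho_nonneg ab by (intro mult_left_mono) auto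
  ultimately show ?thesis using Phi_a by simp
qed

lemma Phi_lip: "x \<in> {a..b} \<Longrightarrow> y \<in> {a..b} \<Longrightarrow> \<bar>Phi y - Phi x\<bar> \<le> \<rho> b * \<bar>y - x\<bar>"
proof -
  assume xy: "x \<in> {a..b}" "y \<in> {a..b}"
  show ?thesis
  proof (cases "x \<le> y")
    case True thus ?thesis using Phi_bounds[of x y] xy by auto
  next
    case False thus ?thesis using Phi_bounds[of y x] xy by auto
  qed
qed

lemma Phi_plip: "x \<in> {a..b} \<Longrightarrow> plip {a..b} Phi x"
  unfolding plip_def using Phi_lip by (intro exI[of _ "\<rho> b"] exI[of _ 1]) auto

lemma E_plip: "x \<in> {a..b} \<Longrightarrow> plip {a..b} E x"
  unfolding E_def
  by (rule plip_compose[OF Phi_plip _ _, where C = "exp (\<rho> b * (b - a))"])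
     (auto intro!: exp_lip dest!: Phi_range)

lemma E_ge1: "x \<in> {a..b} \<Longrightarrow> E x \<ge> 1"
  using Phi_range by (simp add: E_def)

lemma E_pos: "x \<in> {a..b} \<Longrightarrow> E x > 0"
  by (simp add: E_def)

lemma E_mono: "x \<in> {a..b} \<Longrightarrow> y \<in> {a..b} \<Longrightarrow> x \<le> y \<Longrightarrow> E x \<le> E y"
  using Phi_bounds[of x y] by (simp add: E_def)

lemma E_a: "E a = 1"
  by (simp add: E_def Phi_a)

lemma E_deriv:
  assumes "x \<in> {a<..<b}" "x \<notin> C"
  shows "(E has_real_derivative \<rho> x * E x) (at x)"
  using DERIV_fun_exp[OF Phi_deriv[OF assms]] by (simp add: E_def[abs_def] mult.commute)

lemma E_cont: "continuous_on {a..b} E"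
  using E_plip plip_cont by (simp add: continuous_on_eq_continuous_within)

lemma Iz_cont: "continuous_on {a..b} Iz"
proof -
  have "\<forall>x\<in>{a..b}. (1 - x\<^sup>2)\<^sup>2 \<noteq> 0"
  proof
    fix x assume "x \<in> {a..b}"
    hence "x\<^sup>2 < 1" by (rule sq_lt1)
    thus "(1 - x\<^sup>2)\<^sup>2 \<noteq> 0" by simp
  qed
  thus ?thesis unfolding Iz_def[abs_def] by (intro continuous_intros) auto
qed

lemma EIz_cont: "continuous_on {a..b} (\<lambda>t. E t * Iz t)"
  by (intro continuous_intros E_cont Iz_cont)

lemma J_deriv_within: "x \<in> {a..b} \<Longrightarrow> (J has_real_derivative E x * Iz x) (at x within {a..b})"
  unfolding J_def[abs_def] by (rule integral_has_real_derivative[OF EIz_cont])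

lemma J_deriv: "x \<in> {a<..<b} \<Longrightarrow> (J has_real_derivative E x * Iz x) (at x)"
  using J_deriv_within[of x] at_within_Icc_at[of a x b] by auto

lemma J_plip: "x \<in> {a..b} \<Longrightarrow> plip {a..b} J x"
  by (rule plip_deriv[OF J_deriv_within])

lemma J_a: "J a = 0"
  by (simp add: J_def)

lemma u_plip: "x \<in> {a..b} \<Longrightarrow> plip {a..b} u x"
  using u_lip unfolding plip_def lipschitz_on_def dist_real_def
  by (intro exI[of _ L] exI[of _ 1]) auto

lemma good: "AE x in lborel. x \<in> {a<..<b} \<longrightarrow> x \<notin> C \<and> (u has_real_derivative du x) (at x)"
proof -
  have "AE x in lborel. x \<notin> C"
    by (rule AE_not_in[OF countable_imp_null_set_lborel[OF C_countable]])
  thus ?thesis using ode by eventually_elim (auto simp: du_def)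
qed

end

lemma alg1:
  fixes x d uu r lam :: real
  assumes "d \<noteq> 0" "x \<noteq> 0" "x\<^sup>2 = 1 - d"
  shows "(1 + x\<^sup>2) / d\<^sup>2 * uu + - ((1 / x + (x * (2 / d) + r)) * uu + lam * (2 / d)) * (x / d)
       = - (r * (x / d * uu)) - lam * (2 * x / d\<^sup>2)"
proof -
  have e: "x * x = 1 - d" using assms(3) by (simp add: power2_eq_square)
  show ?thesis using assms(1,2) e apply (simp add: field_simps power2_eq_square) by algebra
qed

lemma alg3:
  fixes x d c mm a b :: real
  assumes "d \<noteq> 0" "x \<noteq> 0" "c \<noteq> 0" "x\<^sup>2 = 1 - d"
  shows "(1 / c - ((1 - a * b) / c) / d) * (mm * (2 / d)) = mm * (2 * x / d\<^sup>2 * ((a * b / x - x) / c))"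
proof -
  have e: "x * x = 1 - d" using assms(4) by (simp add: power2_eq_square)
  show ?thesis using assms(1,2,3) e apply (simp add: field_simps power2_eq_square) by algebra
qed

lemma alg4:
  fixes x d U :: real
  assumes "x \<noteq> 0"
  shows "2 * x / d * U = 2 * x\<^sup>2 / d * (U / x)"
  using assms by (cases "d = 0") (simp_all add: field_simps power2_eq_square)

context ST begin

definition "PL f \<longleftrightarrow> (\<forall>x\<in>{a..b}. plip {a..b} f x)"

lemma PL_sub: "PL f \<Longrightarrow> a \<le> p \<Longrightarrow> q \<le> b \<Longrightarrow> \<forall>x\<in>{p..q}. plip {p..q} f x"
proof
  fix x assume "PL f" "a \<le> p" "q \<le> b" "x \<in> {p..q}"
  hence "plip {a..b} f x" unfolding PL_def by auto
  thus "plip {p..q} f x" by (rule plip_subset) (use \<open>a \<le> p\<close> \<open>q \<le> b\<close> in auto)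
qed

lemma PL_add: "PL f \<Longrightarrow> PL g \<Longrightarrow> PL (\<lambda>x. f x + g x)"
  unfolding PL_def by (auto intro: plip_add)
lemma PL_diff: "PL f \<Longrightarrow> PL g \<Longrightarrow> PL (\<lambda>x. f x - g x)"
  unfolding PL_def by (auto intro: plip_diff)
lemma PL_mult: "PL f \<Longrightarrow> PL g \<Longrightarrow> PL (\<lambda>x. f x * g x)"
  unfolding PL_def by (auto intro: plip_mult)
lemma PL_cmult: "PL f \<Longrightarrow> PL (\<lambda>x. c * f x)"
  unfolding PL_def by (auto intro: plip_cmult)
lemma PL_const: "PL (\<lambda>x. c)"
  unfolding PL_def by (auto intro: plip_const)
lemma PL_u: "PL u" unfolding PL_def using u_plip by blast
lemma PL_E: "PL E" unfolding PL_def using E_plip by blast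
lemma PL_J: "PL J" unfolding PL_def using J_plip by blast

lemma ne1: "x \<in> {a..b} \<Longrightarrow> 1 - x\<^sup>2 \<noteq> 0"
  using sq_lt1[of x] by simp

lemma PL_smooth:
  assumes "\<And>x. x \<in> {a..b} \<Longrightarrow> \<exists>d. (f has_real_derivative d) (at x)"
  shows "PL f"
  unfolding PL_def
proof
  fix x assume "x \<in> {a..b}"
  then obtain d where "(f has_real_derivative d) (at x)" using assms by blast
  thus "plip {a..b} f x" by (intro plip_deriv[of f d]) (simp add: has_field_derivative_at_within)
qed

lemma PL_I: "PL I"
proof (rule PL_smooth)
  fix x assume "x \<in> {a..b}"
  hence n1: "1 - x\<^sup>2 \<noteq> 0" by (rule ne1)
  show "\<exists>d. (I has_real_derivative d) (at x)"
    unfolding I_def[abs_def] using n1 by (intro exI) (rule derivative_intros | simp)+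
qed
lemma PL_K: "PL K"
proof (rule PL_smooth)
  fix x assume "x \<in> {a..b}"
  hence n1: "1 - x\<^sup>2 \<noteq> 0" by (rule ne1)
  have "(b - a) * (1 - x\<^sup>2) \<noteq> 0" using n1 ab by simp
  thus "\<exists>d. (K has_real_derivative d) (at x)"
    unfolding K_def[abs_def] by (intro exI) (rule derivative_intros | simp)+
qed
lemma PL_Bf: "PL Bf"
proof (rule PL_smooth)
  fix x assume "x \<in> {a..b}"
  hence "x \<noteq> 0" using inab by force
  thus "\<exists>d. (Bf has_real_derivative d) (at x)"
    unfolding Bf_def[abs_def] using ab by (intro exI) (rule derivative_intros | simp)+
qed
lemma PL_id: "PL (\<lambda>x. x)"
  by (rule PL_smooth) (auto intro!: derivative_intros exI)

lemma mono_good: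
  assumes "a \<le> p" "p \<le> q" "q \<le> b" "PL f"
    and "\<And>x. x \<in> {p<..<q} \<Longrightarrow> x \<notin> C \<Longrightarrow> (u has_real_derivative du x) (at x) \<Longrightarrow>
           \<exists>d\<ge>0. (f has_real_derivative d) (at x)"
  shows "f p \<le> f q"
proof (rule mono_ae[of p q f])
  show "p \<le> q" by fact
  show "\<forall>x\<in>{p..q}. plip {p..q} f x" using PL_sub assms by blast
  show "AE x in lborel. x \<in> {p<..<q} \<longrightarrow> (\<exists>d\<ge>0. (f has_real_derivative d) (at x))"
    using good by (rule eventually_mono) (use assms in auto)
qed

lemma mono_good_strict:
  assumes "a \<le> p" "p \<le> r" "r < s" "s \<le> q" "q \<le> b" "PL f" "e > 0"
    and "\<And>x. x \<in> {p<..<q} \<Longrightarrow> x \<notin> C \<Longrightarrow> (u has_real_derivative du x) (at x) \<Longrightarrow>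
           \<exists>d\<ge>0. (f has_real_derivative d) (at x)"
    and "\<And>x. x \<in> {r<..<s} \<Longrightarrow> x \<notin> C \<Longrightarrow> (u has_real_derivative du x) (at x) \<Longrightarrow>
           \<exists>d\<ge>e. (f has_real_derivative d) (at x)"
  shows "f p < f q"
proof (rule mono_ae_strict[of p r s q f])
  show "p \<le> r" "r < s" "s \<le> q" "e > 0" using assms by auto
  show "\<forall>x\<in>{p..q}. plip {p..q} f x" using PL_sub assms by blast
  show "AE x in lborel. x \<in> {p<..<q} \<longrightarrow> (\<exists>d\<ge>0. (f has_real_derivative d) (at x))"
    using good by (rule eventually_mono) (use assms in auto)
  show "AE x in lborel. x \<in> {r<..<s} \<longrightarrow> (\<exists>d\<ge>e. (f has_real_derivative d) (at x))"
    using good by (rule eventually_mono) (use assms in auto)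
qed

lemma derivs:
  assumes x: "x \<in> {a<..<b}" "x \<notin> C" and ud: "(u has_real_derivative du x) (at x)"
  shows "((\<lambda>x. I x * u x * E x + lam * J x) has_real_derivative 0) (at x)"
    and "((\<lambda>x. K x * E x + l0 * J x) has_real_derivative (m x * E x) * w x * (U0 x / x)) (at x)"
    and "((\<lambda>x. (K x - I x * u x) * E x) has_real_derivative E x * Iz x * (m x * U0 x - (l0 - lam))) (at x)"
    and "(Bf has_real_derivative U0 x / x) (at x)"
proof -
  have xin: "x \<in> {a..b}" using x by auto
  have n1: "1 - x\<^sup>2 \<noteq> 0" using ne1[OF xin] .
  have n1': "1 - x * x \<noteq> 0" using n1 by (simp add: power2_eq_square)
  have x0: "x \<noteq> 0" using inab[OF xin] by simp
  have ba: "b - a \<noteq> 0" using ab by simp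
  have rx: "\<rho> x = m x * zeta x" using rho_eq[OF xin] .
  have Ed: "(E has_real_derivative \<rho> x * E x) (at x)" using E_deriv x by blast
  have Jd: "(J has_real_derivative E x * Iz x) (at x)" using J_deriv x by blast
  have Id: "(I has_real_derivative (1 + x\<^sup>2) / (1 - x\<^sup>2)\<^sup>2) (at x)"
    unfolding I_def[abs_def] using n1 n1'
    by (auto intro!: derivative_eq_intros simp: field_simps power2_eq_square)
  have Kd: "(K has_real_derivative - l0 * Iz x) (at x)"
    unfolding K_def[abs_def] using n1 n1'
    by (auto intro!: derivative_eq_intros simp: Iz_def field_simps power2_eq_square)
  have gd: "((\<lambda>x. -(a * b / x + x)) has_real_derivative a * b / x\<^sup>2 - 1) (at x)"
    using x0 by (auto intro!: derivative_eq_intros simp: field_simps power2_eq_square)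
  have "Bf = (\<lambda>x. -(a * b / x + x) / (b - a))" by (rule ext) (simp add: Bf_def)
  hence Bd: "(Bf has_real_derivative (a * b / x\<^sup>2 - 1) / (b - a)) (at x)"
    using DERIV_cdivide[OF gd, of "b - a"] by simp
  have "(a * b / x - x) / x = a * b / x\<^sup>2 - 1" using x0 by (simp add: field_simps power2_eq_square)
  moreover have "U0 x / x = ((a * b / x - x) / x) / (b - a)" by (simp add: U0_def divide_divide_eq_left mult.commute)
  ultimately show "(Bf has_real_derivative U0 x / x) (at x)" using Bd by simp
  have A1: "(1 + x\<^sup>2) / (1 - x\<^sup>2)\<^sup>2 * u x + du x * I x = - (\<rho> x * (I x * u x)) - lam * Iz x"
    unfolding du_def rho_tilde_def zeta_def I_def Iz_def
    by (rule alg1) (use n1 x0 in auto)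
  have A3: "K x * \<rho> x = m x * (Iz x * U0 x)"
    unfolding rx K_def l0_def zeta_def Iz_def U0_def by (rule alg3) (use n1 x0 ba in auto)
  have A4: "Iz x * U0 x = w x * (U0 x / x)"
    unfolding Iz_def w_def by (rule alg4) (use x0 in auto)
  have "((\<lambda>x. I x * u x * E x + lam * J x) has_real_derivative
      ((1 + x\<^sup>2) / (1 - x\<^sup>2)\<^sup>2 * u x + du x * I x) * E x + (\<rho> x * E x) * (I x * u x) + lam * (E x * Iz x)) (at x)"
    by (rule DERIV_add[OF DERIV_mult[OF DERIV_mult[OF Id ud] Ed] DERIV_cmult[OF Jd]])
  thus "((\<lambda>x. I x * u x * E x + lam * J x) has_real_derivative 0) (at x)"
    by (rule DERIV_cong) (simp only: A1, simp add: algebra_simps)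
  have "((\<lambda>x. K x * E x + l0 * J x) has_real_derivative
      (- l0 * Iz x) * E x + (\<rho> x * E x) * K x + l0 * (E x * Iz x)) (at x)"
    by (rule DERIV_add[OF DERIV_mult[OF Kd Ed] DERIV_cmult[OF Jd]])
  moreover have "(- l0 * Iz x) * E x + (\<rho> x * E x) * K x + l0 * (E x * Iz x) = E x * (K x * \<rho> x)"
    by (simp add: algebra_simps)
  moreover have "E x * (K x * \<rho> x) = (m x * E x) * w x * (U0 x / x)"
    by (simp only: A3 A4) (simp add: ac_simps)
  ultimately show "((\<lambda>x. K x * E x + l0 * J x) has_real_derivative (m x * E x) * w x * (U0 x / x)) (at x)"
    by (metis DERIV_cong)
  have "((\<lambda>x. (K x - I x * u x) * E x) has_real_derivative
      (- l0 * Iz x - ((1 + x\<^sup>2) / (1 - x\<^sup>2)\<^sup>2 * u x + du x * I x)) * E x + (\<rho> x * E x) * (K x - I x * u x)) (at x)"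
    by (rule DERIV_mult[OF DERIV_diff[OF Kd DERIV_mult[OF Id ud]] Ed])
  moreover have "(- l0 * Iz x - ((1 + x\<^sup>2) / (1 - x\<^sup>2)\<^sup>2 * u x + du x * I x)) * E x + (\<rho> x * E x) * (K x - I x * u x)
      = E x * (lam * Iz x - l0 * Iz x + K x * \<rho> x)"
    by (simp only: A1, simp add: algebra_simps)
  moreover have "E x * (lam * Iz x - l0 * Iz x + K x * \<rho> x) = E x * Iz x * (m x * U0 x - (l0 - lam))"
    by (simp only: A3) (simp add: algebra_simps)
  ultimately show "((\<lambda>x. (K x - I x * u x) * E x) has_real_derivative E x * Iz x * (m x * U0 x - (l0 - lam))) (at x)"
    by (metis DERIV_cong)
qed

end

lemma alg5:
  fixes x d c a b :: real
  assumes "d \<noteq> 0" "x \<noteq> 0" "c \<noteq> 0" "x\<^sup>2 = 1 - d"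
  shows "1 / c - ((1 - a * b) / c) / d = x / d * ((a * b / x - x) / c)"
proof -
  have e: "x * x = 1 - d" using assms(4) by (simp add: power2_eq_square)
  show ?thesis using assms(1,2,3) e apply (simp add: field_simps power2_eq_square) by algebra
qed

context ST begin

definition "x1 = sqrt (a * b)"
definition "phi x = m x * E x"

lemma K_IU0: "x \<in> {a..b} \<Longrightarrow> K x = I x * U0 x"
proof -
  assume x: "x \<in> {a..b}"
  have n1: "1 - x\<^sup>2 \<noteq> 0" using ne1[OF x] .
  have x0: "x \<noteq> 0" using inab[OF x] by simp
  show ?thesis unfolding K_def l0_def I_def U0_def by (rule alg5) (use n1 x0 ab in auto)
qed

lemma U0_a: "U0 a = 1" using ab by (simp add: U0_def)
lemma U0_b: "U0 b = -1"
proof -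
  have "b - a \<noteq> 0" "b \<noteq> 0" using ab by auto
  hence "U0 b = (a - b) / (b - a)" by (simp add: U0_def)
  also have "\<dots> = -1" using \<open>b - a \<noteq> 0\<close> by (simp add: divide_eq_eq)
  finally show ?thesis .
qed
lemma K_a: "K a = I a" using K_IU0[of a] U0_a ab by simp
lemma K_b: "K b = - I b" using K_IU0[of b] U0_b ab by simp
lemma Bf_ab: "Bf a = Bf b" using ab by (simp add: Bf_def add.commute)

lemma I_pos: "x \<in> {a..b} \<Longrightarrow> I x > 0"
  using inab[of x] sq_lt1[of x] by (simp add: I_def)

lemma x1_prop: "a < x1" "x1 < b" "x1 * x1 = a * b"
proof -
  have "a * a < a * b" "a * b < b * b" using ab by auto
  hence "sqrt (a * a) < sqrt (a * b)" "sqrt (a * b) < sqrt (b * b)" by (simp_all only: real_sqrt_less_iff)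
  thus "a < x1" "x1 < b" using ab by (simp_all add: x1_def)
  show "x1 * x1 = a * b" using ab by (simp add: x1_def)
qed

lemma x1_in: "x1 \<in> {a..b}" using x1_prop by simp

lemma U0_strict: "0 < x \<Longrightarrow> x < y \<Longrightarrow> U0 y < U0 x"
proof -
  assume xy: "0 < x" "x < y"
  have "a * b / y < a * b / x" using xy ab by (simp add: frac_less2)
  hence "a * b / y - y < a * b / x - x" using xy by simp
  thus ?thesis using ab by (simp add: U0_def divide_strict_right_mono)
qed

lemma U0_mono: "0 < x \<Longrightarrow> x \<le> y \<Longrightarrow> U0 y \<le> U0 x"
  using U0_strict by (cases "x = y") (auto intro: less_imp_le)

lemma U0_x1: "U0 x1 = 0"
proof -
  have "x1 > 0" using x1_prop ab by simp
  hence "a * b / x1 = x1" using x1_prop(3) by (simp add: field_simps)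
  thus ?thesis by (simp add: U0_def)
qed

lemma U0_nonneg: "x \<in> {a..b} \<Longrightarrow> x \<le> x1 \<Longrightarrow> U0 x \<ge> 0"
  using U0_mono[of x x1] U0_x1 inab by auto

lemma U0_nonpos: "x \<le> b \<Longrightarrow> x1 \<le> x \<Longrightarrow> U0 x \<le> 0"
  using U0_mono[of x1 x] U0_x1 x1_prop ab by auto

lemma U0_neg: "x1 < x \<Longrightarrow> U0 x < 0"
  using U0_strict[of x1 x] U0_x1 x1_prop ab by auto

lemma sq_mono_aux:
  assumes "x \<in> {a..b}" "y \<in> {a..b}" "x \<le> y"
  shows "x\<^sup>2 \<le> y\<^sup>2" "0 < 1 - y\<^sup>2" "(1 - y\<^sup>2)\<^sup>2 \<le> (1 - x\<^sup>2)\<^sup>2" "0 < (1 - y\<^sup>2)\<^sup>2"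
proof -
  have "0 \<le> x" using inab[OF assms(1)] by simp
  thus x2: "x\<^sup>2 \<le> y\<^sup>2" using power_mono[OF assms(3), of 2] by simp
  show y1: "0 < 1 - y\<^sup>2" using sq_lt1[OF assms(2)] by simp
  have "1 - y\<^sup>2 \<le> 1 - x\<^sup>2" using x2 by simp
  thus "(1 - y\<^sup>2)\<^sup>2 \<le> (1 - x\<^sup>2)\<^sup>2" using y1 by (intro power_mono) auto
  show "0 < (1 - y\<^sup>2)\<^sup>2" using y1 by simp
qed

lemma w_mono: "x \<in> {a..b} \<Longrightarrow> y \<in> {a..b} \<Longrightarrow> x \<le> y \<Longrightarrow> w x \<le> w y"
  unfolding w_def using sq_mono_aux[of x y] by (intro frac_le) auto

lemma w_strict: "x \<in> {a..b} \<Longrightarrow> y \<in> {a..b} \<Longrightarrow> x < y \<Longrightarrow> w x < w y"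
proof -
  assume xy: "x \<in> {a..b}" "y \<in> {a..b}" "x < y"
  have "x\<^sup>2 < y\<^sup>2" using xy inab[of x] by (intro power_strict_mono) auto
  thus ?thesis unfolding w_def using sq_mono_aux[of x y] xy by (intro frac_less) auto
qed

lemma w_nonneg: "w (x::real) \<ge> 0"
  by (simp add: w_def)

lemma Iz_mono: "x \<in> {a..b} \<Longrightarrow> y \<in> {a..b} \<Longrightarrow> x \<le> y \<Longrightarrow> Iz x \<le> Iz y"
proof -
  assume xy: "x \<in> {a..b}" "y \<in> {a..b}" "x \<le> y"
  note s = sq_mono_aux[OF xy]
  have "0 \<le> 2 * y" using inab[OF xy(2)] by simp
  moreover have "2 * x \<le> 2 * y" using xy by simp
  ultimately show ?thesis unfolding Iz_def using s(4,3) by (rule frac_le)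
qed

lemma Iz_pos: "x \<in> {a..b} \<Longrightarrow> Iz x > 0"
  unfolding Iz_def using inab[of x] ne1[of x] by simp

lemma phi_mono: "x \<in> {a..b} \<Longrightarrow> y \<in> {a..b} \<Longrightarrow> x \<le> y \<Longrightarrow> phi x \<le> phi y"
  unfolding phi_def using m_mono E_mono m_nonneg E_pos by (intro mult_mono) (auto intro: less_imp_le)

lemma phi_nonneg: "x \<in> {a..b} \<Longrightarrow> phi x \<ge> 0"
  unfolding phi_def using m_nonneg E_pos by (simp add: less_imp_le)

lemma key:
  assumes x: "x \<in> {a..b}"
  shows "phi x * w x * (U0 x / x) \<le> phi x1 * w x1 * (U0 x / x)"
proof (cases "x \<le> x1")
  case True
  have "phi x * w x \<le> phi x1 * w x1"
    using phi_mono[OF x x1_in True] w_mono[OF x x1_in True] phi_nonneg[OF x] w_nonneg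
    by (intro mult_mono) auto
  moreover have "U0 x / x \<ge> 0" using U0_nonneg[OF x True] inab[OF x] by simp
  ultimately show ?thesis by (rule mult_right_mono)
next
  case False
  have "phi x1 * w x1 \<le> phi x * w x"
    using phi_mono[OF x1_in x] w_mono[OF x1_in x] False phi_nonneg[OF x1_in] w_nonneg
    by (intro mult_mono) auto
  moreover have "U0 x / x \<le> 0" using U0_nonpos[of x] False x inab[OF x] by (simp add: divide_nonpos_pos)
  ultimately show ?thesis by (rule mult_right_mono_neg)
qed

lemma PL_F: "PL (\<lambda>x. I x * u x * E x + lam * J x)"
  by (intro PL_add PL_mult PL_cmult PL_I PL_u PL_E PL_J)

lemma PL_G: "PL (\<lambda>x. K x * E x + l0 * J x)"
  by (intro PL_add PL_mult PL_cmult PL_K PL_E PL_J)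

lemma PL_Q: "PL (\<lambda>x. (K x - I x * u x) * E x)"
  by (intro PL_diff PL_mult PL_K PL_I PL_u PL_E)

lemma Jb_pos: "J b > 0"
proof -
  have "J a < J b"
  proof (rule mono_good_strict[of a a b b J "Iz a"])
    show "a \<le> a" "a \<le> a" "a < b" "b \<le> b" "b \<le> b" using ab by auto
    show "PL J" by (rule PL_J)
    show "Iz a > 0" using Iz_pos ab by simp
    fix x assume x: "x \<in> {a<..<b}"
    hence xin: "x \<in> {a..b}" by auto
    have "Iz a \<le> Iz x" using Iz_mono[of a x] x ab by auto
    moreover have "Iz x \<le> E x * Iz x" using E_ge1[OF xin] Iz_pos[OF xin] by simp
    ultimately have "Iz a \<le> E x * Iz x" by linarith
    thus "\<exists>d\<ge>Iz a. (J has_real_derivative d) (at x)" using J_deriv[OF x] by blast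
    show "\<exists>d\<ge>0. (J has_real_derivative d) (at x)"
      using J_deriv[OF x] E_pos[OF xin] Iz_pos[OF xin] by (intro exI[of _ "E x * Iz x"]) auto
  qed
  thus ?thesis using J_a by simp
qed

lemma Eq1: "lam * J b = I a + I b * E b"
proof -
  let ?F = "\<lambda>x. I x * u x * E x + lam * J x"
  have d: "\<exists>d\<ge>0. (?F has_real_derivative d) (at x)"
    if "x \<in> {a<..<b}" "x \<notin> C" "(u has_real_derivative du x) (at x)" for x
    using derivs(1)[OF that] by blast
  have d2: "\<exists>d\<ge>0. ((\<lambda>x. 0 - ?F x) has_real_derivative d) (at x)"
    if "x \<in> {a<..<b}" "x \<notin> C" "(u has_real_derivative du x) (at x)" for x
  proof -
    have "((\<lambda>x. 0 - ?F x) has_real_derivative 0 - 0) (at x)"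
      by (rule DERIV_diff[OF DERIV_const derivs(1)[OF that]])
    thus ?thesis by (intro exI[of _ 0]) simp
  qed
  have "?F a \<le> ?F b" by (rule mono_good[OF _ _ _ PL_F d]) (use ab in auto)
  moreover have "(\<lambda>x. 0 - ?F x) a \<le> (\<lambda>x. 0 - ?F x) b"
    by (rule mono_good[OF _ _ _ PL_diff[OF PL_const PL_F] d2]) (use ab in auto)
  ultimately have "?F a = ?F b" by simp
  thus ?thesis using ua ub E_a J_a by simp
qed

end

context ST begin

definition "Gf x = K x * E x + l0 * J x"
definition "Dh x = phi x1 * w x1 * Bf x - (K x * E x + l0 * J x)"

lemma PL_Dh: "PL Dh"
proof -
  have "PL (\<lambda>x. phi x1 * w x1 * Bf x - (K x * E x + l0 * J x))"
    by (intro PL_diff PL_cmult PL_Bf PL_G)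
  moreover have "Dh = (\<lambda>x. phi x1 * w x1 * Bf x - (K x * E x + l0 * J x))" by (rule ext) (simp add: Dh_def)
  ultimately show ?thesis by simp
qed

lemma Dh_deriv:
  assumes "x \<in> {a<..<b}" "x \<notin> C" "(u has_real_derivative du x) (at x)"
  shows "(Dh has_real_derivative phi x1 * w x1 * (U0 x / x) - phi x * w x * (U0 x / x)) (at x)"
proof -
  have "((\<lambda>x. phi x1 * w x1 * Bf x - (K x * E x + l0 * J x)) has_real_derivative
       phi x1 * w x1 * (U0 x / x) - (m x * E x) * w x * (U0 x / x)) (at x)"
    by (rule DERIV_diff[OF DERIV_cmult[OF derivs(4)[OF assms]] derivs(2)[OF assms]])
  moreover have "Dh = (\<lambda>x. phi x1 * w x1 * Bf x - (K x * E x + l0 * J x))" by (rule ext) (simp add: Dh_def)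
  ultimately show ?thesis by (simp add: phi_def)
qed

lemma Dh_ab: "Dh a = phi x1 * w x1 * Bf a - I a" "Dh b = phi x1 * w x1 * Bf a + I b * E b - l0 * J b"
  using K_a K_b E_a J_a Bf_ab by (simp_all add: Dh_def)

lemma lam_ge: "l0 \<le> lam"
proof -
  have "Dh a \<le> Dh b"
  proof (rule mono_good[OF _ _ _ PL_Dh])
    show "a \<le> a" "a \<le> b" "b \<le> b" using ab by auto
    fix x assume x: "x \<in> {a<..<b}" "x \<notin> C" "(u has_real_derivative du x) (at x)"
    have "phi x * w x * (U0 x / x) \<le> phi x1 * w x1 * (U0 x / x)" using key[of x] x by auto
    hence "0 \<le> phi x1 * w x1 * (U0 x / x) - phi x * w x * (U0 x / x)" by linarith
    thus "\<exists>d\<ge>0. (Dh has_real_derivative d) (at x)" using Dh_deriv[OF x] by blast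
  qed
  hence "l0 * J b \<le> lam * J b" using Dh_ab Eq1 by simp
  thus ?thesis using Jb_pos by simp
qed

lemma lam_gt:
  assumes "\<exists>xr\<in>{a..<b}. \<rho> xr \<noteq> 0"
  shows "l0 < lam"
proof -
  obtain xr where xr: "xr \<in> {a..<b}" "\<rho> xr \<noteq> 0" using assms by blast
  have xrin: "xr \<in> {a..b}" using xr by auto
  have "\<rho> xr \<ge> 0" using rho_nonneg xrin by blast
  hence "\<rho> xr > 0" using xr(2) by simp
  hence mxr: "m xr > 0" using zeta_pos[OF xrin] by (simp add: m_def)
  define x2 where "x2 = max xr x1"
  have x2: "x2 \<in> {a..b}" "x2 < b" "x1 \<le> x2" "xr \<le> x2"
    using xr x1_prop by (auto simp: x2_def)
  have "m x2 > 0" using m_mono[OF xrin x2(1) x2(4)] mxr by simp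
  hence phix2: "phi x2 > 0" using E_pos[OF x2(1)] by (simp add: phi_def)
  define x3 where "x3 = (x2 + b) / 2"
  have x3: "x3 \<in> {a..b}" "x2 < x3" "x3 < b" using x2 by (auto simp: x3_def)
  have x13: "x1 < x3" using x2 x3 by simp
  define eps where "eps = phi x2 * (w x3 - w x1) * (- U0 x3 / b)"
  have wpos: "w x3 - w x1 > 0" using w_strict[OF x1_in x3(1) x13] by simp
  have "b > 0" using ab by simp
  hence upos: "- U0 x3 / b > 0" using U0_neg[OF x13] by (simp add: divide_neg_pos)
  have eps: "eps > 0" unfolding eps_def by (intro mult_pos_pos phix2 wpos upos)
  have "Dh a < Dh b"
  proof (rule mono_good_strict[OF _ _ _ _ _ PL_Dh eps])
    show "a \<le> a" "a \<le> x3" "x3 < b" "b \<le> b" "b \<le> b" using x3 by auto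
    fix x assume x: "x \<in> {a<..<b}" "x \<notin> C" "(u has_real_derivative du x) (at x)"
    have "phi x * w x * (U0 x / x) \<le> phi x1 * w x1 * (U0 x / x)" using key[of x] x by auto
    hence "0 \<le> phi x1 * w x1 * (U0 x / x) - phi x * w x * (U0 x / x)" by linarith
    thus "\<exists>d\<ge>0. (Dh has_real_derivative d) (at x)" using Dh_deriv[OF x] by blast
  next
    fix x assume x0: "x \<in> {x3<..<b}" and x: "x \<notin> C" "(u has_real_derivative du x) (at x)"
    have xab: "x \<in> {a<..<b}" using x0 x3 by auto
    have xin: "x \<in> {a..b}" using xab by auto
    have xpos: "x > 0" using inab[OF xin] by simp
    have "phi x2 * w x3 \<le> phi x * w x"
      using phi_mono[OF x2(1) xin] w_mono[OF x3(1) xin] x0 x3 phi_nonneg[OF x2(1)] w_nonneg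
      by (intro mult_mono) auto
    moreover have "phi x1 * w x1 \<le> phi x2 * w x1"
      using phi_mono[OF x1_in x2(1) x2(3)] w_nonneg by (intro mult_right_mono) auto
    ultimately have A: "phi x2 * (w x3 - w x1) \<le> phi x * w x - phi x1 * w x1"
      by (simp add: right_diff_distrib)
    have "U0 x \<le> U0 x3" using U0_mono[of x3 x] x0 x3 inab[OF x3(1)] by auto
    hence "- U0 x3 \<le> - U0 x" by simp
    moreover have "0 \<le> - U0 x3" using U0_neg[OF x13] by simp
    ultimately have B: "- U0 x3 / b \<le> - U0 x / x"
      using xpos x0 by (intro frac_le) auto
    have Ap: "0 \<le> phi x2 * (w x3 - w x1)" using phix2 wpos by simp
    hence Ap2: "0 \<le> phi x * w x - phi x1 * w x1" using A by linarith
    have "eps \<le> (phi x * w x - phi x1 * w x1) * (- U0 x / x)"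
      unfolding eps_def using A B Ap2 upos by (intro mult_mono) auto
    also have "\<dots> = phi x1 * w x1 * (U0 x / x) - phi x * w x * (U0 x / x)"
      by (simp add: algebra_simps)
    finally show "\<exists>d\<ge>eps. (Dh has_real_derivative d) (at x)"
      using Dh_deriv[OF xab x] by blast
  qed
  hence "l0 * J b < lam * J b" using Dh_ab Eq1 by simp
  thus ?thesis using Jb_pos by simp
qed

end

context ST begin

definition "hq x = m x * U0 x - (l0 - lam)"
definition "Qf x = (K x - I x * u x) * E x"

lemma PL_Qf: "PL Qf"
proof -
  have "Qf = (\<lambda>x. (K x - I x * u x) * E x)" by (rule ext) (simp add: Qf_def)
  thus ?thesis using PL_Q by simp
qed

lemma PL_nQf: "PL (\<lambda>x. 0 - Qf x)"
  by (rule PL_diff[OF PL_const PL_Qf])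

lemma Qf_deriv:
  assumes "x \<in> {a<..<b}" "x \<notin> C" "(u has_real_derivative du x) (at x)"
  shows "(Qf has_real_derivative E x * Iz x * hq x) (at x)"
proof -
  have "Qf = (\<lambda>x. (K x - I x * u x) * E x)" by (rule ext) (simp add: Qf_def)
  thus ?thesis using derivs(3)[OF assms] by (simp add: hq_def)
qed

lemma nQf_deriv:
  assumes "x \<in> {a<..<b}" "x \<notin> C" "(u has_real_derivative du x) (at x)"
  shows "((\<lambda>x. 0 - Qf x) has_real_derivative E x * Iz x * (- hq x)) (at x)"
proof -
  have "((\<lambda>x. 0 - Qf x) has_real_derivative 0 - E x * Iz x * hq x) (at x)"
    by (rule DERIV_diff[OF DERIV_const Qf_deriv[OF assms]])
  thus ?thesis by simp
qed

lemma Qf_a: "Qf a = 0" using K_a ua E_a by (simp add: Qf_def)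
lemma Qf_b: "Qf b = 0" using K_b ub by (simp add: Qf_def)

lemma hA: "t \<in> {a..b} \<Longrightarrow> t \<le> x1 \<Longrightarrow> hq t \<ge> lam - l0"
  unfolding hq_def using m_nonneg[of t] U0_nonneg[of t] by simp

lemma hB: "t \<in> {a..b} \<Longrightarrow> x \<in> {a..b} \<Longrightarrow> x1 \<le> t \<Longrightarrow> t \<le> x \<Longrightarrow> hq x \<le> hq t"
proof -
  assume tx: "t \<in> {a..b}" "x \<in> {a..b}" "x1 \<le> t" "t \<le> x"
  have U: "U0 x \<le> U0 t" "U0 t \<le> 0" "U0 x \<le> 0"
    using U0_mono[of t x] U0_nonpos[of t] U0_nonpos[of x] tx inab[of t] by auto
  have M: "0 \<le> m t" "m t \<le> m x" using m_nonneg m_mono tx by auto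
  have "m x * U0 x \<le> m t * U0 x" using M U by (intro mult_right_mono_neg) auto
  also have "\<dots> \<le> m t * U0 t" using M U by (intro mult_left_mono) auto
  finally show ?thesis unfolding hq_def by simp
qed

lemma EIz_ge: "t \<in> {a..b} \<Longrightarrow> Iz a \<le> E t * Iz t"
proof -
  assume t: "t \<in> {a..b}"
  have "Iz a \<le> Iz t" using Iz_mono[of a t] t ab by auto
  moreover have "Iz t \<le> E t * Iz t" using E_ge1[OF t] Iz_pos[OF t] by simp
  ultimately show ?thesis by linarith
qed

lemma EIz_pos: "t \<in> {a..b} \<Longrightarrow> 0 < E t * Iz t"
  using E_pos Iz_pos by simp

lemma Qf_nonneg:
  assumes x: "x \<in> {a..b}"
  shows "Qf x \<ge> 0"
proof (cases "hq x \<ge> 0")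
  case True
  have "Qf a \<le> Qf x"
  proof (rule mono_good[OF _ _ _ PL_Qf])
    show "a \<le> a" "a \<le> x" "x \<le> b" using x by auto
    fix t assume t: "t \<in> {a<..<x}" "t \<notin> C" "(u has_real_derivative du t) (at t)"
    have tab: "t \<in> {a<..<b}" using t x by auto
    hence tin: "t \<in> {a..b}" by auto
    have "hq t \<ge> 0"
    proof (cases "t \<le> x1")
      case True thus ?thesis using hA[OF tin] lam_ge by simp
    next
      case False thus ?thesis using hB[OF tin x] t \<open>hq x \<ge> 0\<close> by simp
    qed
    hence "0 \<le> E t * Iz t * hq t" using EIz_pos[OF tin] by simp
    thus "\<exists>d\<ge>0. (Qf has_real_derivative d) (at t)" using Qf_deriv[OF tab t(2,3)] by blast
  qed
  thus ?thesis using Qf_a by simp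
next
  case False
  have xx1: "x1 < x"
  proof (rule ccontr)
    assume "\<not> x1 < x"
    hence "hq x \<ge> lam - l0" using hA[OF x] by simp
    thus False using False lam_ge by simp
  qed
  have "(\<lambda>x. 0 - Qf x) x \<le> (\<lambda>x. 0 - Qf x) b"
  proof (rule mono_good[OF _ _ _ PL_nQf])
    show "a \<le> x" "x \<le> b" "b \<le> b" using x by auto
    fix t assume t: "t \<in> {x<..<b}" "t \<notin> C" "(u has_real_derivative du t) (at t)"
    have tab: "t \<in> {a<..<b}" using t x by auto
    hence tin: "t \<in> {a..b}" by auto
    have "hq t \<le> hq x" using hB[OF x tin] xx1 t by simp
    hence "0 < - hq t" using False by simp
    hence "0 < E t * Iz t * (- hq t)" by (rule mult_pos_pos[OF EIz_pos[OF tin]])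
    hence "0 \<le> E t * Iz t * (- hq t)" by (rule less_imp_le)
    thus "\<exists>d\<ge>0. ((\<lambda>x. 0 - Qf x) has_real_derivative d) (at t)" using nQf_deriv[OF tab t(2,3)] by blast
  qed
  thus ?thesis using Qf_b by simp
qed

lemma Qf_pos:
  assumes x: "x \<in> {a<..<b}" and lg: "l0 < lam"
  shows "Qf x > 0"
proof (cases "hq x \<ge> 0")
  case True
  have xin: "x \<in> {a..b}" using x by auto
  define s where "s = min x x1"
  have s: "a < s" "s \<le> x" "s \<le> x1" using x x1_prop by (auto simp: s_def)
  have e: "Iz a * (lam - l0) > 0" using Iz_pos[of a] ab lg by simp
  have "Qf a < Qf x"
  proof (rule mono_good_strict[OF _ _ _ _ _ PL_Qf e])
    show "a \<le> a" "a \<le> a" "a < s" "s \<le> x" "x \<le> b" using s x by auto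
    fix t assume t: "t \<in> {a<..<x}" "t \<notin> C" "(u has_real_derivative du t) (at t)"
    have tab: "t \<in> {a<..<b}" using t x by auto
    hence tin: "t \<in> {a..b}" by auto
    have "hq t \<ge> 0"
    proof (cases "t \<le> x1")
      case True thus ?thesis using hA[OF tin] lg by simp
    next
      case False thus ?thesis using hB[OF tin xin] t \<open>hq x \<ge> 0\<close> by simp
    qed
    hence "0 \<le> E t * Iz t * hq t" using EIz_pos[OF tin] by simp
    thus "\<exists>d\<ge>0. (Qf has_real_derivative d) (at t)" using Qf_deriv[OF tab t(2,3)] by blast
  next
    fix t assume t: "t \<in> {a<..<s}" "t \<notin> C" "(u has_real_derivative du t) (at t)"
    have tab: "t \<in> {a<..<b}" using t s x by auto
    hence tin: "t \<in> {a..b}" by auto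
    have "hq t \<ge> lam - l0" using hA[OF tin] t s by simp
    moreover have "lam - l0 \<ge> 0" using lg by simp
    ultimately have "Iz a * (lam - l0) \<le> (E t * Iz t) * hq t"
      using EIz_ge[OF tin] Iz_pos[of a] ab by (intro mult_mono) auto
    thus "\<exists>d\<ge>Iz a * (lam - l0). (Qf has_real_derivative d) (at t)" using Qf_deriv[OF tab t(2,3)] by blast
  qed
  thus ?thesis using Qf_a by simp
next
  case False
  have xin: "x \<in> {a..b}" using x by auto
  have xx1: "x1 < x"
  proof (rule ccontr)
    assume "\<not> x1 < x"
    hence "hq x \<ge> lam - l0" using hA[OF xin] by simp
    thus False using False lg by simp
  qed
  have "0 < - hq x" using False by simp
  moreover have "Iz a > 0" using Iz_pos[of a] ab by simp
  ultimately have e: "Iz a * (- hq x) > 0" using mult_pos_pos by blast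
  have "(\<lambda>x. 0 - Qf x) x < (\<lambda>x. 0 - Qf x) b"
  proof (rule mono_good_strict[OF _ _ _ _ _ PL_nQf e])
    show "a \<le> x" "x \<le> x" "x < b" "b \<le> b" "b \<le> b" using x by auto
    fix t assume t: "t \<in> {x<..<b}" "t \<notin> C" "(u has_real_derivative du t) (at t)"
    have tab: "t \<in> {a<..<b}" using t x by auto
    hence tin: "t \<in> {a..b}" by auto
    have "hq t \<le> hq x" using hB[OF xin tin] xx1 t by simp
    hence "Iz a * (- hq x) \<le> (E t * Iz t) * (- hq t)"
      using EIz_ge[OF tin] Iz_pos[of a] ab False by (intro mult_mono) auto
    thus "\<exists>d\<ge>Iz a * (- hq x). ((\<lambda>x. 0 - Qf x) has_real_derivative d) (at t)"
      using nQf_deriv[OF tab t(2,3)] by blast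
  next
    fix t assume t: "t \<in> {x<..<b}" "t \<notin> C" "(u has_real_derivative du t) (at t)"
    have tab: "t \<in> {a<..<b}" using t x by auto
    hence tin: "t \<in> {a..b}" by auto
    have "hq t \<le> hq x" using hB[OF xin tin] xx1 t by simp
    hence "0 < - hq t" using False by simp
    hence "0 < E t * Iz t * (- hq t)" by (rule mult_pos_pos[OF EIz_pos[OF tin]])
    hence "0 \<le> E t * Iz t * (- hq t)" by (rule less_imp_le)
    thus "\<exists>d\<ge>0. ((\<lambda>x. 0 - Qf x) has_real_derivative d) (at t)" using nQf_deriv[OF tab t(2,3)] by blast
  qed
  thus ?thesis using Qf_b by simp
qed

lemma u_le: "x \<in> {a..b} \<Longrightarrow> u x \<le> U0 x"
proof -
  assume x: "x \<in> {a..b}"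
  have "0 \<le> (K x - I x * u x) * E x" using Qf_nonneg[OF x] by (simp add: Qf_def)
  hence "0 \<le> K x - I x * u x" using E_pos[OF x] by (simp add: zero_le_mult_iff)
  hence "0 \<le> I x * (U0 x - u x)" using K_IU0[OF x] by (simp add: right_diff_distrib)
  thus ?thesis using I_pos[OF x] by (simp add: zero_le_mult_iff)
qed

lemma u_lt: "\<exists>xr\<in>{a..<b}. \<rho> xr \<noteq> 0 \<Longrightarrow> x \<in> {a<..<b} \<Longrightarrow> u x < U0 x"
proof -
  assume r: "\<exists>xr\<in>{a..<b}. \<rho> xr \<noteq> 0" and x: "x \<in> {a<..<b}"
  have xin: "x \<in> {a..b}" using x by auto
  have "0 < (K x - I x * u x) * E x" using Qf_pos[OF x lam_gt[OF r]] by (simp add: Qf_def)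
  hence "0 < K x - I x * u x" using E_pos[OF xin] by (simp add: zero_less_mult_iff)
  hence "0 < I x * (U0 x - u x)" using K_IU0[OF xin] by (simp add: right_diff_distrib)
  thus ?thesis using I_pos[OF xin] by (simp add: zero_less_mult_iff)
qed

end

context ST begin

lemma U0_cont: "continuous_on {a..b} U0"
proof -
  have "\<forall>x\<in>{a..b}. x \<noteq> 0" using inab by force
  thus ?thesis unfolding U0_def[abs_def] using ab by (intro continuous_intros) auto
qed

lemma level:
  assumes t: "t \<in> {0<..<1}"
  obtains X where "a < X" "X < b" "U0 X = t"
proof -
  have "U0 b \<le> t" "t \<le> U0 a" using t U0_a U0_b by auto
  then obtain X where X: "a \<le> X" "X \<le> b" "U0 X = t"
    using IVT2'[of U0 b t a, OF _ _ _ U0_cont] ab by auto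
  have "X \<noteq> a" using X U0_a t by auto
  moreover have "X \<noteq> b" using X U0_b t by auto
  ultimately have "a < X" "X < b" using X by auto
  thus ?thesis using that X(3) by blast
qed

lemma U0_refl:
  assumes X: "X > 0"
  shows "U0 (a * b / X) = - U0 X"
proof -
  have e: "a * b / (a * b / X) = X" using ab X by simp
  have "b - a \<noteq> 0" using ab by simp
  thus ?thesis unfolding U0_def e by (simp add: field_simps)
qed

lemma u_cont: "continuous_on {a..b} u"
  using u_plip plip_cont by (simp add: continuous_on_eq_continuous_within)

lemma set_meas: "{x \<in> {a..b}. t < - u x} \<in> sets borel"
proof -
  let ?S = "{x \<in> {a..b}. t < - u x}"
  have c: "continuous_on {a<..<b} (\<lambda>x. - u x)"
    using u_cont by (intro continuous_intros) (auto intro: continuous_on_subset)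
  have o: "open ((\<lambda>x. - u x) -` {t<..} \<inter> {a<..<b})"
    using c continuous_on_open_vimage[of "{a<..<b}" "\<lambda>x. - u x"] by auto
  have f: "closed ({a, b} \<inter> ?S)" by (intro finite_imp_closed) auto
  have "?S = ((\<lambda>x. - u x) -` {t<..} \<inter> {a<..<b}) \<union> ({a, b} \<inter> ?S)" by auto
  moreover have "((\<lambda>x. - u x) -` {t<..} \<inter> {a<..<b}) \<union> ({a, b} \<inter> ?S) \<in> sets borel"
    using o f by auto
  ultimately show ?thesis by simp
qed

lemma sets_mu': "A \<in> sets borel \<Longrightarrow> A \<in> sets mu"
  using sets_mu by simp

lemma per_t:
  assumes t: "t \<in> {0<..<1}"
  shows "emeasure mu {x \<in> {a..b}. t < u x} \<le> emeasure mu {x \<in> {a..b}. t < - u x}"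
    and "(\<exists>xr\<in>{a..<b}. \<rho> xr \<noteq> 0) \<Longrightarrow>
          emeasure mu {x \<in> {a..b}. t < u x} < emeasure mu {x \<in> {a..b}. t < - u x}"
proof -
  obtain X where X: "a < X" "X < b" "U0 X = t" using level[OF t] by blast
  have Xpos: "X > 0" using X ab by simp
  define Y where "Y = a * b / X"
  have UY: "U0 Y = - t" using U0_refl[OF Xpos] X by (simp add: Y_def)
  have Y1: "Y < b" using X ab by (simp add: Y_def divide_less_eq)
  have Y2: "a < Y" using X ab by (simp add: Y_def less_divide_eq)
  have Ypos: "Y > 0" using Y2 ab by simp
  have lnY: "ln Y = ln a + ln b - ln X"
    using ab Xpos by (simp add: Y_def ln_div ln_mult)
  have sub1: "{x \<in> {a..b}. t < u x} \<subseteq> {a..X}"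
  proof
    fix x assume x: "x \<in> {x \<in> {a..b}. t < u x}"
    hence xin: "x \<in> {a..b}" and "t < u x" by auto
    hence "t < U0 x" using u_le[OF xin] by simp
    hence "x < X" using U0_mono[of X x] X Xpos by force
    thus "x \<in> {a..X}" using xin by simp
  qed
  have sub2: "{Y<..<b} \<subseteq> {x \<in> {a..b}. t < - u x}"
  proof
    fix x assume x: "x \<in> {Y<..<b}"
    hence xin: "x \<in> {a..b}" using Y2 by auto
    have "U0 x < - t" using U0_strict[of Y x] x Ypos UY by auto
    thus "x \<in> {x \<in> {a..b}. t < - u x}" using u_le[OF xin] xin by auto
  qed
  have m1: "emeasure mu {a..X} = ennreal (ln X - ln a)" using mu_Icc[of a X] ab X by simp
  have m2: "emeasure mu {Y<..<b} = ennreal (ln X - ln a)" using mu_Ioo[of Y b] Ypos Y1 lnY by simp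
  have A: "emeasure mu {x \<in> {a..b}. t < u x} \<le> ennreal (ln X - ln a)"
  proof -
    have "{a..X} \<in> sets mu" by (simp add: sets_mu)
    hence "emeasure mu {x \<in> {a..b}. t < u x} \<le> emeasure mu {a..X}" by (rule emeasure_mono[OF sub1])
    thus ?thesis using m1 by simp
  qed
  have B: "ennreal (ln X - ln a) \<le> emeasure mu {x \<in> {a..b}. t < - u x}"
    using emeasure_mono[OF sub2 sets_mu'[OF set_meas]] m2 by simp
  show "emeasure mu {x \<in> {a..b}. t < u x} \<le> emeasure mu {x \<in> {a..b}. t < - u x}"
    using A B by (rule order_trans)
  assume r: "\<exists>xr\<in>{a..<b}. \<rho> xr \<noteq> 0"
  have "X \<in> {a<..<b}" using X by simp
  hence "u X < U0 X" by (rule u_lt[OF r])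
  hence ul: "u X < t" using X(3) by simp
  have "continuous (at X within {a..b}) u" using u_plip[of X] plip_cont X by auto
  hence "\<exists>d>0. \<forall>x\<in>{a..b}. dist x X < d \<longrightarrow> dist (u x) (u X) < t - u X"
    unfolding continuous_within_eps_delta using ul by simp
  then obtain d where d: "d > 0" "\<And>x. x \<in> {a..b} \<Longrightarrow> dist x X < d \<Longrightarrow> dist (u x) (u X) < t - u X"
    by blast
  define X' where "X' = max a (X - d)"
  have X': "a \<le> X'" "X' < X" using X d by (auto simp: X'_def)
  have sub3: "{x \<in> {a..b}. t < u x} \<subseteq> {a..X'}"
  proof
    fix x assume x: "x \<in> {x \<in> {a..b}. t < u x}"
    hence xin: "x \<in> {a..X}" using sub1 by blast
    have xab: "x \<in> {a..b}" and tu: "t < u x" using x by auto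
    have "\<not> dist x X < d"
    proof
      assume "dist x X < d"
      hence "dist (u x) (u X) < t - u X" using d(2)[OF xab] by simp
      thus False using tu by (simp add: dist_real_def)
    qed
    hence "x \<le> X - d" using xin by (auto simp: dist_real_def)
    thus "x \<in> {a..X'}" using xin by (auto simp: X'_def)
  qed
  have m3: "emeasure mu {a..X'} = ennreal (ln X' - ln a)" using mu_Icc[of a X'] ab X' by simp
  have "ln X' < ln X" using X' ab by simp
  hence "ennreal (ln X' - ln a) < ennreal (ln X - ln a)"
    using X ab by (intro ennreal_lessI) auto
  hence "emeasure mu {x \<in> {a..b}. t < u x} < ennreal (ln X - ln a)"
  proof -
    have "{a..X'} \<in> sets mu" by (simp add: sets_mu)
    hence "emeasure mu {x \<in> {a..b}. t < u x} \<le> emeasure mu {a..X'}" by (rule emeasure_mono[OF sub3])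
    thus ?thesis using m3 \<open>ennreal (ln X' - ln a) < ennreal (ln X - ln a)\<close> by simp
  qed
  thus "emeasure mu {x \<in> {a..b}. t < u x} < emeasure mu {x \<in> {a..b}. t < - u x}"
    using B by (rule less_le_trans)
qed

end

theorem mainTheorem12:
  fixes a b lam L :: real and \<rho> u :: "real \<Rightarrow> real"
  assumes ab: "0 < a" "a < b" "b < 1"
    and rho_nonneg: "\<forall>x\<in>{a..b}. \<rho> x \<ge> 0"
    and rho_mono: "mono_on {a..b} (\<lambda>x. \<rho> x / zeta x)"
    and rho_bdd: "bounded ((\<lambda>x. \<rho> x / zeta x) ` {a..b})"
    and u_lip: "L-lipschitz_on {a..b} u"
    and ode: "AE x in lborel. x \<in> {a<..<b} \<longrightarrow>
       (u has_real_derivative (- ((1 / x + rho_tilde \<rho> x) * u x + lam * zeta x))) (at x)"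
    and ua: "u a = 1" and ub: "u b = -1"
    and u_gt: "\<forall>x\<in>{a..<b}. u x > -1"
  shows "(\<forall>t\<in>{0<..<1}. mu_dist u a b t \<le> mu_dist (\<lambda>x. - u x) a b t)
       \<and> ((\<exists>x\<in>{a..<b}. \<rho> x \<noteq> 0) \<longrightarrow>
            (\<forall>t\<in>{0<..<1}. mu_dist u a b t < mu_dist (\<lambda>x. - u x) a b t))"
proof -
  interpret ST a b lam L \<rho> u
    by (unfold_locales) (use ab rho_nonneg rho_mono u_lip ode ua ub in auto)
  show ?thesis
    unfolding mu_dist_def using per_t by auto
qed


end
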